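(* Let $\varphi\colon G\to G$ be an endomorphism of a torsion abelian group $G$ and $H\leq G$ a subgroup with $\varphi H\subseteq H$. If the restriction $\varphi|_H\colon H\to H$ and the induced endomorphism $\widetilde\varphi\colon G/H\to G/H$, $\widetilde\varphi(g+H)=\varphi g+H$, are positively expansive, then $\varphi$ is positively expansive. Analogously, if $\varphi$ is an automorphism such that $\varphi|_H$ is an automorphism of $H$, and $\varphi|_H$ and the induced automorphism $\widetilde\varphi$ of $G/H$ are expansive, then $\varphi$ is expansive.
   Context: $\mathbb N=\{0,1,2,\dots\}$. An endomorphism $\varphi$ of an abelian group $G$ is positively expansive if there is a finite subgroup $S\leq G$ such that for every finite subgroup $F\leq G$ there is $n\in\mathbb N$ with $F\subseteq\sum_{k=0}^n\varphi^kS$. An automorphism $\varphi$ is expansive if there is a finite subgroup $S\leq G$ such that for every finite subgroup $F\leq G$ there is $n\in\mathbb N$ with $F\subseteq\sum_{|k|\leq n}\varphi^kS$. *)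

theory Defs
  imports "HOL-Algebra.Algebra"
begin

text \<open>Groups are HOL-Algebra (commutative) groups written multiplicatively; the
  paper's sum of subsets A + B corresponds to the set product A <#> B.\<close>

definition torsion_group :: "('a, 'b) monoid_scheme \<Rightarrow> bool" where
  "torsion_group G \<longleftrightarrow> (\<forall>g\<in>carrier G. \<exists>n::nat. n > 0 \<and> g [^]\<^bsub>G\<^esub> n = \<one>\<^bsub>G\<^esub>)"

fun set_sum_list :: "('a, 'b) monoid_scheme \<Rightarrow> 'a set list \<Rightarrow> 'a set" where
  "set_sum_list G [] = {\<one>\<^bsub>G\<^esub>}"
| "set_sum_list G (A # As) = A <#>\<^bsub>G\<^esub> set_sum_list G As"

text \<open>Integer powers of a map on the carrier; negative powers use the inverse map
  (meaningful when the map is an automorphism).\<close>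
definition int_iter :: "('a, 'b) monoid_scheme \<Rightarrow> ('a \<Rightarrow> 'a) \<Rightarrow> int \<Rightarrow> 'a \<Rightarrow> 'a" where
  "int_iter G f k = (if 0 \<le> k then f ^^ nat k else (inv_into (carrier G) f) ^^ nat (- k))"

definition pos_expansive :: "('a, 'b) monoid_scheme \<Rightarrow> ('a \<Rightarrow> 'a) \<Rightarrow> bool" where
  "pos_expansive G f \<longleftrightarrow>
     (\<exists>S. subgroup S G \<and> finite S \<and>
        (\<forall>F. subgroup F G \<and> finite F \<longrightarrow>
           (\<exists>n::nat. F \<subseteq> set_sum_list G (map (\<lambda>k. (f ^^ k) ` S) [0..<Suc n]))))"

definition expansive :: "('a, 'b) monoid_scheme \<Rightarrow> ('a \<Rightarrow> 'a) \<Rightarrow> bool" where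
  "expansive G f \<longleftrightarrow>
     (\<exists>S. subgroup S G \<and> finite S \<and>
        (\<forall>F. subgroup F G \<and> finite F \<longrightarrow>
           (\<exists>n::nat. F \<subseteq> set_sum_list G (map (\<lambda>k. int_iter G f k ` S) [- int n..int n]))))"

end

theory Submission
  imports Defs
begin

lemma set_sum_list_carrier: "set_sum_list (G\<lparr>carrier := H\<rparr>) As = set_sum_list G As"
  by (induction As) (simp_all add: set_mult_def)

lemma mem_set_mult: "a \<in> A \<Longrightarrow> b \<in> B \<Longrightarrow> a \<otimes>\<^bsub>G\<^esub> b \<in> A <#>\<^bsub>G\<^esub> B"
  unfolding set_mult_def by blast

lemma (in comm_group) sum_gen:
  "\<forall>A\<in>set As. subgroup A G \<Longrightarrow> set_sum_list G As = generate G (\<Union>(set As))"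
proof (induction As)
  case Nil
  then show ?case by (simp add: generate_empty)
next
  case (Cons A As)
  then have IH: "set_sum_list G As = generate G (\<Union>(set As))" and A: "subgroup A G"
    and As: "\<forall>B\<in>set As. subgroup B G" by auto
  have U: "\<Union>(set As) \<subseteq> carrier G" using As subgroup.subset by blast
  have AU: "A \<union> \<Union>(set As) \<subseteq> carrier G" using U A subgroup.subset by blast
  have sg: "subgroup (A <#> generate G (\<Union>(set As))) G"
    by (rule mult_subgroups[OF A generate_is_subgroup[OF U]])
  have "A <#> generate G (\<Union>(set As)) = generate G (A \<union> \<Union>(set As))"
  proof
    show "A <#> generate G (\<Union>(set As)) \<subseteq> generate G (A \<union> \<Union>(set As))"
    proof
      fix x assume "x \<in> A <#> generate G (\<Union>(set As))"
      then obtain a b where ab: "a \<in> A" "b \<in> generate G (\<Union>(set As))" "x = a \<otimes> b"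
        unfolding set_mult_def by auto
      have a: "a \<in> generate G (A \<union> \<Union>(set As))" using ab(1) generate.incl[of a "A \<union> \<Union>(set As)" G] by simp
      have b: "b \<in> generate G (A \<union> \<Union>(set As))"
        using ab(2) mono_generate[of "\<Union>(set As)" "A \<union> \<Union>(set As)"] by auto
      show "x \<in> generate G (A \<union> \<Union>(set As))" using ab(3) generate.eng[OF a b] by simp
    qed
  next
    have "A \<union> \<Union>(set As) \<subseteq> A <#> generate G (\<Union>(set As))"
    proof
      fix x assume x: "x \<in> A \<union> \<Union>(set As)"
      then have xc: "x \<in> carrier G" using AU by blast
      show "x \<in> A <#> generate G (\<Union>(set As))"
      proof (cases "x \<in> A")
        case True
        then have "x \<otimes> \<one> \<in> A <#> generate G (\<Union>(set As))"
          using mem_set_mult[OF True generate.one] by blast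
        then show ?thesis using xc by simp
      next
        case False
        then have "x \<in> generate G (\<Union>(set As))" using x generate.incl[of x "\<Union>(set As)" G] False by blast
        then have "\<one> \<otimes> x \<in> A <#> generate G (\<Union>(set As))"
          using mem_set_mult[OF subgroup.one_closed[OF A]] by blast
        then show ?thesis using xc by simp
      qed
    qed
    then show "generate G (A \<union> \<Union>(set As)) \<subseteq> A <#> generate G (\<Union>(set As))"
      using generate_subgroup_incl[OF _ sg] by blast
  qed
  then show ?case using IH by simp
qed

lemma finite_set_mult: "finite A \<Longrightarrow> finite B \<Longrightarrow> finite (A <#>\<^bsub>G\<^esub> B)"
proof -
  assume "finite A" "finite B"
  have "A <#>\<^bsub>G\<^esub> B = (\<lambda>(a,b). a \<otimes>\<^bsub>G\<^esub> b) ` (A \<times> B)"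
    unfolding set_mult_def by force
  then show ?thesis using \<open>finite A\<close> \<open>finite B\<close> finite_cartesian_product finite_imageI by metis
qed

lemma (in comm_group) finite_gen:
  assumes tor: "torsion_group G"
  shows "finite Xs \<Longrightarrow> Xs \<subseteq> carrier G \<Longrightarrow> finite (generate G Xs)"
proof (induction Xs rule: finite_induct)
  case empty
  then show ?case by (simp add: generate_empty)
next
  case (insert x Xs)
  then have xc: "x \<in> carrier G" and Xc: "Xs \<subseteq> carrier G" by auto
  have f1: "finite (generate G {x})"
  proof -
    obtain n::nat where "n > 0" "x [^] n = \<one>" using tor xc unfolding torsion_group_def by blast
    then have "finite (carrier (subgroup_generated G {x}))"
      using finite_cyclic_subgroup[OF xc] by auto
    moreover have "carrier G \<inter> {x} = {x}" using xc by blast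
    ultimately show ?thesis unfolding carrier_subgroup_generated by simp
  qed
  have sg: "subgroup (generate G {x} <#> generate G Xs) G"
    using mult_subgroups generate_is_subgroup xc Xc by auto
  have "insert x Xs \<subseteq> generate G {x} <#> generate G Xs"
  proof
    fix y assume "y \<in> insert x Xs"
    then show "y \<in> generate G {x} <#> generate G Xs"
    proof
      assume "y = x"
      then have "y \<otimes> \<one> \<in> generate G {x} <#> generate G Xs"
        using mem_set_mult[OF generate.incl[of x "{x}" G] generate.one] by simp
      then show ?thesis using xc \<open>y = x\<close> by simp
    next
      assume "y \<in> Xs"
      then have "\<one> \<otimes> y \<in> generate G {x} <#> generate G Xs"
        using mem_set_mult[OF generate.one generate.incl[of y Xs G]] by simp
      then show ?thesis using Xc \<open>y \<in> Xs\<close> by auto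
    qed
  qed
  then have "generate G (insert x Xs) \<subseteq> generate G {x} <#> generate G Xs"
    using generate_subgroup_incl[OF _ sg] by blast
  moreover have "finite (generate G {x} <#> generate G Xs)"
    using finite_set_mult f1 insert Xc by blast
  ultimately show ?case using finite_subset by blast
qed


lemma (in comm_group) core:
  fixes f :: "'i \<Rightarrow> 'a \<Rightarrow> 'a" and g :: "'i \<Rightarrow> 'a set \<Rightarrow> 'a set" and J :: "nat \<Rightarrow> 'i set"
  assumes tor: "torsion_group G" and H: "subgroup H G"
    and fhom: "\<And>k. f k \<in> hom G G"
    and geq: "\<And>k x. x \<in> carrier G \<Longrightarrow> g k (H #> x) = H #> f k x"
    and Jmono: "\<And>n m. n \<le> m \<Longrightarrow> J n \<subseteq> J m" and Jfin: "\<And>n. finite (J n)"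
    and SH: "subgroup SH G" "SH \<subseteq> H" "finite SH"
    and SHexp: "\<And>K. subgroup K G \<Longrightarrow> K \<subseteq> H \<Longrightarrow> finite K \<Longrightarrow> \<exists>n. K \<subseteq> generate G (\<Union>k\<in>J n. f k ` SH)"
    and SQ: "subgroup SQ (G Mod H)" "finite SQ"
    and SQexp: "\<And>F. subgroup F (G Mod H) \<Longrightarrow> finite F \<Longrightarrow> \<exists>n. F \<subseteq> generate (G Mod H) (\<Union>k\<in>J n. g k ` SQ)"
  shows "\<exists>S. subgroup S G \<and> finite S \<and> (\<forall>F. subgroup F G \<and> finite F \<longrightarrow> (\<exists>n. F \<subseteq> generate G (\<Union>k\<in>J n. f k ` S)))"
proof -
  interpret N: normal H G using subgroup_imp_normal[OF H] .
  have pihom: "(\<lambda>a. H #> a) \<in> hom G (G Mod H)" by (rule N.r_coset_hom_Mod)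
  interpret Q: group "G Mod H" by (rule N.factorgroup_is_group)
  interpret pi: group_hom G "G Mod H" "\<lambda>a. H #> a"
    using pihom by (simp add: group_hom_def group_hom_axioms_def is_group Q.is_group)
  define r where "r C = (SOME x. x \<in> C)" for C :: "'a set"
  have SQc: "SQ \<subseteq> rcosets H" using subgroup.subset[OF SQ(1)] by (simp add: FactGroup_def)
  have rC: "r C \<in> carrier G \<and> H #> r C = C" if C: "C \<in> SQ" for C
  proof -
    have "C \<in> rcosets H" using SQc C by blast
    then obtain a where a: "a \<in> carrier G" "C = H #> a" unfolding RCOSETS_def by auto
    have "a \<in> C" using a rcos_self[OF a(1) H] by simp
    then have "r C \<in> C" unfolding r_def by (rule someI)
    then have rc: "r C \<in> H #> a" using a by simp
    have "H #> a = H #> r C" by (rule repr_independence[OF rc a(1) H])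
    moreover have "r C \<in> carrier G" using rc r_coset_subset_G[OF subgroup.subset[OF H] a(1)] by blast
    ultimately show ?thesis using a by simp
  qed
  define R where "R = r ` SQ"
  have Rc: "R \<subseteq> carrier G" using rC R_def by auto
  define T where "T = generate G R"
  have Tsg: "subgroup T G" unfolding T_def by (rule generate_is_subgroup[OF Rc])
  have Tfin: "finite T" unfolding T_def using finite_gen[OF tor _ Rc] R_def SQ(2) by simp
  have Tc: "T \<subseteq> carrier G" using subgroup.subset[OF Tsg] .
  have SQT: "SQ \<subseteq> (\<lambda>a. H #> a) ` T"
  proof
    fix C assume C: "C \<in> SQ"
    have "r C \<in> R" unfolding R_def using C by (rule imageI)
    then have "r C \<in> T" unfolding T_def by (rule generate.incl)
    then show "C \<in> (\<lambda>a. H #> a) ` T" using rC[OF C] by force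
  qed
  define S where "S = SH <#> T"
  have Ssg: "subgroup S G" unfolding S_def by (rule mult_subgroups[OF SH(1) Tsg])
  have Sfin: "finite S" unfolding S_def by (rule finite_set_mult[OF SH(3) Tfin])
  have SHS: "SH \<subseteq> S"
  proof
    fix x assume x: "x \<in> SH"
    then have "x \<otimes> \<one> \<in> S" unfolding S_def by (rule mem_set_mult[OF _ subgroup.one_closed[OF Tsg]])
    then show "x \<in> S" using x subgroup.subset[OF SH(1)] by auto
  qed
  have TS: "T \<subseteq> S"
  proof
    fix x assume x: "x \<in> T"
    then have "\<one> \<otimes> x \<in> S" unfolding S_def by (rule mem_set_mult[OF subgroup.one_closed[OF SH(1)]])
    then show "x \<in> S" using x Tc by auto
  qed
  have fc: "f k x \<in> carrier G" if "x \<in> carrier G" for k x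
    using fhom[of k] that unfolding hom_def by blast
  have Sc: "S \<subseteq> carrier G" using subgroup.subset[OF Ssg] .
  show ?thesis
  proof (rule exI[of _ S], intro conjI allI impI)
    show "subgroup S G" "finite S" by (rule Ssg, rule Sfin)
    fix F assume "subgroup F G \<and> finite F"
    then have F: "subgroup F G" "finite F" by auto
    have Fc: "F \<subseteq> carrier G" using subgroup.subset[OF F(1)] .
    have "subgroup ((\<lambda>a. H #> a) ` F) (G Mod H)" by (rule pi.subgroup_img_is_subgroup[OF F(1)])
    then obtain n1 where n1: "(\<lambda>a. H #> a) ` F \<subseteq> generate (G Mod H) (\<Union>k\<in>J n1. g k ` SQ)"
      using SQexp F(2) by blast
    define Y where "Y = (\<Union>k\<in>J n1. f k ` T)"
    have Yc: "Y \<subseteq> carrier G" unfolding Y_def using fc Tc by blast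
    have Yfin: "finite Y" unfolding Y_def using Jfin Tfin by simp
    define W where "W = generate G Y"
    have Wsg: "subgroup W G" unfolding W_def by (rule generate_is_subgroup[OF Yc])
    have Wfin: "finite W" unfolding W_def by (rule finite_gen[OF tor Yfin Yc])
    have Wc: "W \<subseteq> carrier G" using subgroup.subset[OF Wsg] .
    have gsub: "(\<Union>k\<in>J n1. g k ` SQ) \<subseteq> (\<lambda>a. H #> a) ` Y"
    proof
      fix D assume "D \<in> (\<Union>k\<in>J n1. g k ` SQ)"
      then obtain k C where k: "k \<in> J n1" "C \<in> SQ" "D = g k C" by blast
      obtain t where t: "t \<in> T" "C = H #> t" using SQT k(2) by blast
      have tc: "t \<in> carrier G" using t(1) Tc by blast
      have "D = H #> f k t" using k(3) t(2) geq[OF tc] by simp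
      moreover have "f k t \<in> Y" unfolding Y_def using k(1) t(1) by blast
      ultimately show "D \<in> (\<lambda>a. H #> a) ` Y" by blast
    qed
    have piF: "(\<lambda>a. H #> a) ` F \<subseteq> (\<lambda>a. H #> a) ` W"
    proof -
      have "generate (G Mod H) (\<Union>k\<in>J n1. g k ` SQ) \<subseteq> generate (G Mod H) ((\<lambda>a. H #> a) ` Y)"
        by (rule Q.mono_generate[OF gsub])
      also have "\<dots> = (\<lambda>a. H #> a) ` W" unfolding W_def by (rule pi.generate_img[OF Yc])
      finally show ?thesis using n1 by blast
    qed
    define K where "K = H \<inter> (F <#> W)"
    have Ksg: "subgroup K G" unfolding K_def
      by (rule subgroups_Inter_pair[OF H mult_subgroups[OF F(1) Wsg]])
    have Kfin: "finite K" unfolding K_def using finite_set_mult[OF F(2) Wfin] by blast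
    obtain n2 where n2: "K \<subseteq> generate G (\<Union>k\<in>J n2. f k ` SH)"
      using SHexp[OF Ksg _ Kfin] K_def by blast
    define M where "M = max n1 n2"
    have gen1: "generate G (\<Union>k\<in>J n2. f k ` SH) \<subseteq> generate G (\<Union>k\<in>J M. f k ` S)"
      by (rule mono_generate) (use Jmono[of n2 M] SHS M_def in auto)
    have gen2: "W \<subseteq> generate G (\<Union>k\<in>J M. f k ` S)"
      unfolding W_def Y_def by (rule mono_generate) (use Jmono[of n1 M] TS M_def in auto)
    show "\<exists>n. F \<subseteq> generate G (\<Union>k\<in>J n. f k ` S)"
    proof (intro exI[of _ M] subsetI)
      fix x assume x: "x \<in> F"
      then have xc: "x \<in> carrier G" using Fc by blast
      obtain w where w: "w \<in> W" "H #> x = H #> w" using piF x by blast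
      have wc: "w \<in> carrier G" using w(1) Wc by blast
      have "x \<in> H #> w" using rcos_self[OF xc H] w(2) by simp
      then obtain h where h: "h \<in> H" "x = h \<otimes> w" unfolding r_coset_def by blast
      have hc: "h \<in> carrier G" using h(1) subgroup.subset[OF H] by blast
      have "x \<otimes> inv w = h" using h(2) hc wc by (simp add: m_assoc)
      moreover have "inv w \<in> W" using subgroup.m_inv_closed[OF Wsg w(1)] .
      ultimately have "h \<in> F <#> W" using mem_set_mult[OF x, of "inv w" W G] by simp
      then have "h \<in> K" using h(1) K_def by blast
      then have hZ: "h \<in> generate G (\<Union>k\<in>J M. f k ` S)" using n2 gen1 by blast
      have wZ: "w \<in> generate G (\<Union>k\<in>J M. f k ` S)" using gen2 w(1) by blast
      show "x \<in> generate G (\<Union>k\<in>J M. f k ` S)" using generate.eng[OF hZ wZ] h(2) by simp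
    qed
  qed
qed


lemma hom_funpow: "f \<in> hom G G \<Longrightarrow> f ^^ k \<in> hom G G"
  by (induction k) (auto simp: hom_def Pi_def)

lemma (in comm_group) coset_map_subgroup:
  assumes H: "subgroup H G" and fhom: "f \<in> hom G G"
    and geq: "\<And>x. x \<in> carrier G \<Longrightarrow> g (H #> x) = H #> f x"
    and SQ: "subgroup SQ (G Mod H)"
  shows "subgroup (g ` SQ) (G Mod H)"
proof -
  interpret N: normal H G using subgroup_imp_normal[OF H] .
  interpret Q: group "G Mod H" by (rule N.factorgroup_is_group)
  have fc: "f x \<in> carrier G" if "x \<in> carrier G" for x
    using fhom that unfolding hom_def by blast
  have "g \<in> hom (G Mod H) (G Mod H)"
  proof (rule homI)
    fix C assume "C \<in> carrier (G Mod H)"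
    then obtain a where a: "a \<in> carrier G" "C = H #> a" unfolding carrier_FactGroup by blast
    show "g C \<in> carrier (G Mod H)" unfolding carrier_FactGroup using a geq fc by auto
  next
    fix C D assume "C \<in> carrier (G Mod H)" "D \<in> carrier (G Mod H)"
    then obtain a b where a: "a \<in> carrier G" "C = H #> a" and b: "b \<in> carrier G" "D = H #> b"
      unfolding carrier_FactGroup by blast
    have "g (C \<otimes>\<^bsub>G Mod H\<^esub> D) = g (H #> (a \<otimes> b))" using a b N.rcos_sum by simp
    also have "\<dots> = H #> (f a \<otimes> f b)" using geq[of "a \<otimes> b"] a b fhom unfolding hom_def by simp
    also have "\<dots> = (H #> f a) <#> (H #> f b)" using N.rcos_sum fc a b by simp
    also have "\<dots> = g C \<otimes>\<^bsub>G Mod H\<^esub> g D" using a b geq by simp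
    finally show "g (C \<otimes>\<^bsub>G Mod H\<^esub> D) = g C \<otimes>\<^bsub>G Mod H\<^esub> g D" .
  qed
  then interpret gh: group_hom "G Mod H" "G Mod H" g
    by (simp add: group_hom_def group_hom_axioms_def Q.is_group)
  show ?thesis by (rule gh.subgroup_img_is_subgroup[OF SQ])
qed

lemma funpow_coset:
  assumes fc: "\<And>x. x \<in> carrier G \<Longrightarrow> f x \<in> carrier G"
    and geq: "\<And>x. x \<in> carrier G \<Longrightarrow> g (H #>\<^bsub>G\<^esub> x) = H #>\<^bsub>G\<^esub> f x"
  shows "x \<in> carrier G \<Longrightarrow> (g ^^ k) (H #>\<^bsub>G\<^esub> x) = H #>\<^bsub>G\<^esub> (f ^^ k) x \<and> (f ^^ k) x \<in> carrier G"
  by (induction k) (auto simp: geq fc)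


lemma (in group) int_iter_hom:
  assumes "\<phi> \<in> iso G G" shows "int_iter G \<phi> k \<in> hom G G"
proof -
  have "\<phi> \<in> hom G G" using assms by (simp add: iso_def)
  moreover have "inv_into (carrier G) \<phi> \<in> hom G G" using iso_set_sym[OF assms] by (simp add: iso_def)
  ultimately show ?thesis unfolding int_iter_def by (simp add: hom_funpow)
qed

lemma (in group) int_iter_sub:
  assumes H: "subgroup H G" and isoG: "\<phi> \<in> iso G G"
    and isoH: "\<phi> \<in> iso (G\<lparr>carrier := H\<rparr>) (G\<lparr>carrier := H\<rparr>)" and x: "x \<in> H"
  shows "int_iter (G\<lparr>carrier := H\<rparr>) \<phi> k x = int_iter G \<phi> k x"
proof -
  have bijH: "bij_betw \<phi> H H" using isoH by (simp add: iso_def)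
  have injG: "inj_on \<phi> (carrier G)" using isoG by (simp add: iso_def bij_betw_def)
  have Hc: "H \<subseteq> carrier G" using subgroup.subset[OF H] .
  have step: "inv_into H \<phi> y = inv_into (carrier G) \<phi> y \<and> inv_into H \<phi> y \<in> H" if y: "y \<in> H" for y
  proof -
    have yi: "y \<in> \<phi> ` H" using bij_betw_imp_surj_on[OF bijH] y by simp
    have zH: "inv_into H \<phi> y \<in> H" by (rule inv_into_into[OF yi])
    have "\<phi> (inv_into H \<phi> y) = y" by (rule f_inv_into_f[OF yi])
    then have "inv_into (carrier G) \<phi> y = inv_into H \<phi> y"
      using inv_into_f_eq[OF injG] zH Hc by blast
    then show ?thesis using zH by simp
  qed
  have it: "\<forall>y\<in>H. (inv_into H \<phi> ^^ m) y = (inv_into (carrier G) \<phi> ^^ m) y \<and> (inv_into H \<phi> ^^ m) y \<in> H" for m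
  proof (induction m)
    case 0
    then show ?case by simp
  next
    case (Suc m)
    show ?case
    proof
      fix y assume y: "y \<in> H"
      then have e: "(inv_into H \<phi> ^^ m) y = (inv_into (carrier G) \<phi> ^^ m) y"
        and m: "(inv_into H \<phi> ^^ m) y \<in> H" using Suc by auto
      show "(inv_into H \<phi> ^^ Suc m) y = (inv_into (carrier G) \<phi> ^^ Suc m) y \<and> (inv_into H \<phi> ^^ Suc m) y \<in> H"
        using step[OF m] e by (metis comp_apply funpow.simps(2))
    qed
  qed
  show ?thesis unfolding int_iter_def using it x by simp
qed

lemma (in comm_group) int_iter_coset:
  assumes H: "subgroup H G" and isoG: "\<phi> \<in> iso G G"
    and isoH: "\<phi> \<in> iso (G\<lparr>carrier := H\<rparr>) (G\<lparr>carrier := H\<rparr>)"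
    and psi: "\<forall>g\<in>carrier G. \<psi> (H #> g) = H #> \<phi> g"
    and x: "x \<in> carrier G"
  shows "int_iter (G Mod H) \<psi> k (H #> x) = H #> int_iter G \<phi> k x"
proof -
  have bijH: "bij_betw \<phi> H H" using isoH by (simp add: iso_def)
  have bijG: "bij_betw \<phi> (carrier G) (carrier G)" using isoG by (simp add: iso_def)
  have injG: "inj_on \<phi> (carrier G)" using bijG by (simp add: bij_betw_def)
  have phom: "\<phi> \<in> hom G G" using isoG by (simp add: iso_def)
  have Hc: "H \<subseteq> carrier G" using subgroup.subset[OF H] .
  have pc: "\<phi> y \<in> carrier G" if "y \<in> carrier G" for y using phom that unfolding hom_def by blast
  define iG where "iG = inv_into (carrier G) \<phi>"
  have iGc: "iG y \<in> carrier G" if "y \<in> carrier G" for y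
    unfolding iG_def using inv_into_into bij_betw_imp_surj_on[OF bijG] that by metis
  have piG: "\<phi> (iG y) = y" if "y \<in> carrier G" for y
    unfolding iG_def using f_inv_into_f bij_betw_imp_surj_on[OF bijG] that by metis
  have injQ: "inj_on \<psi> (carrier (G Mod H))"
  proof (rule inj_onI)
    fix C D assume C: "C \<in> carrier (G Mod H)" and D: "D \<in> carrier (G Mod H)" and eq: "\<psi> C = \<psi> D"
    obtain a where a: "a \<in> carrier G" "C = H #> a" using C unfolding carrier_FactGroup by blast
    obtain b where b: "b \<in> carrier G" "D = H #> b" using D unfolding carrier_FactGroup by blast
    have "H #> \<phi> a = H #> \<phi> b" using eq a b psi by simp
    then have "\<phi> a \<in> H #> \<phi> b" using rcos_self[OF pc[OF a(1)] H] by simp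
    then obtain h where h: "h \<in> H" "\<phi> a = h \<otimes> \<phi> b" unfolding r_coset_def by blast
    have "h \<in> \<phi> ` H" using bij_betw_imp_surj_on[OF bijH] h(1) by simp
    then obtain h' where h': "h' \<in> H" "h = \<phi> h'" by blast
    have h'c: "h' \<in> carrier G" using h'(1) Hc by blast
    have "\<phi> a = \<phi> (h' \<otimes> b)" using h(2) h' hom_mult[OF phom h'c b(1)] by simp
    then have "a = h' \<otimes> b" using injG a(1) h'c b(1) unfolding inj_on_def by blast
    then have "a \<in> H #> b" using rcosI[OF h'(1) Hc b(1)] by simp
    then have "H #> b = H #> a" by (rule repr_independence[OF _ b(1) H])
    then show "C = D" using a b by simp
  qed
  have step: "inv_into (carrier (G Mod H)) \<psi> (H #> y) = H #> iG y" if y: "y \<in> carrier G" for y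
  proof (rule inv_into_f_eq[OF injQ])
    show "H #> iG y \<in> carrier (G Mod H)" unfolding carrier_FactGroup using iGc[OF y] by blast
    show "\<psi> (H #> iG y) = H #> y" using psi iGc[OF y] piG[OF y] by simp
  qed
  have pos: "(\<psi> ^^ m) (H #> x) = H #> (\<phi> ^^ m) x" for m
    using funpow_coset[of G \<phi> \<psi> H x m] pc psi x by blast
  have neg: "(inv_into (carrier (G Mod H)) \<psi> ^^ m) (H #> x) = H #> (iG ^^ m) x" for m
    using funpow_coset[of G iG "inv_into (carrier (G Mod H)) \<psi>" H x m] iGc step x by blast
  show ?thesis unfolding int_iter_def using pos neg iG_def by simp
qed


theorem proposition2p9:
  fixes G (structure) and \<phi> :: "'a \<Rightarrow> 'a" and H :: "'a set" and \<psi> :: "'a set \<Rightarrow> 'a set"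
  assumes "comm_group G" and "torsion_group G"
    and "subgroup H G" and "\<phi> \<in> hom G G" and "\<phi> ` H \<subseteq> H"
    and "\<forall>g\<in>carrier G. \<psi> (H #> g) = H #> \<phi> g"
  shows "(pos_expansive (G\<lparr>carrier := H\<rparr>) \<phi> \<and> pos_expansive (G Mod H) \<psi>
            \<longrightarrow> pos_expansive G \<phi>)
       \<and> (\<phi> \<in> iso G G \<and> \<phi> \<in> iso (G\<lparr>carrier := H\<rparr>) (G\<lparr>carrier := H\<rparr>)
            \<and> expansive (G\<lparr>carrier := H\<rparr>) \<phi> \<and> expansive (G Mod H) \<psi>
            \<longrightarrow> expansive G \<phi>)"
proof -
  interpret G: comm_group G by (rule assms(1))
  have tor: "torsion_group G" and H: "subgroup H G" and phom: "\<phi> \<in> hom G G"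
    and psi: "\<forall>g\<in>carrier G. \<psi> (H #> g) = H #> \<phi> g" using assms by auto
  have pc: "\<phi> y \<in> carrier G" if "y \<in> carrier G" for y using phom that unfolding hom_def by blast
  have QG: "comm_group (G Mod H)" by (rule G.abelian_FactGroup[OF H])
  have sumG: "set_sum_list G (map A xs) = generate G (\<Union>k\<in>set xs. A k)"
    if "\<And>k. subgroup (A k) G" for A :: "'i \<Rightarrow> 'a set" and xs
    using G.sum_gen[of "map A xs"] that by simp
  have sumQ: "set_sum_list (G Mod H) (map A xs) = generate (G Mod H) (\<Union>k\<in>set xs. A k)"
    if "\<And>k. subgroup (A k) (G Mod H)" for A :: "'i \<Rightarrow> 'a set set" and xs
    using comm_group.sum_gen[OF QG, of "map A xs"] that by simp
  have imgG: "subgroup (f ` A) G" if "f \<in> hom G G" "subgroup A G" for f A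
  proof -
    interpret gh: group_hom G G f using that(1)
      by (simp add: group_hom_def group_hom_axioms_def G.is_group)
    show ?thesis by (rule gh.subgroup_img_is_subgroup[OF that(2)])
  qed
  have P1: "pos_expansive (G\<lparr>carrier := H\<rparr>) \<phi> \<and> pos_expansive (G Mod H) \<psi> \<longrightarrow> pos_expansive G \<phi>"
  proof
    assume "pos_expansive (G\<lparr>carrier := H\<rparr>) \<phi> \<and> pos_expansive (G Mod H) \<psi>"
    then obtain SH SQ where SH: "subgroup SH (G\<lparr>carrier := H\<rparr>)" "finite SH"
      and SHe: "\<forall>F. subgroup F (G\<lparr>carrier := H\<rparr>) \<and> finite F \<longrightarrow>
           (\<exists>n::nat. F \<subseteq> set_sum_list (G\<lparr>carrier := H\<rparr>) (map (\<lambda>k. (\<phi> ^^ k) ` SH) [0..<Suc n]))"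
      and SQ: "subgroup SQ (G Mod H)" "finite SQ"
      and SQe: "\<forall>F. subgroup F (G Mod H) \<and> finite F \<longrightarrow>
           (\<exists>n::nat. F \<subseteq> set_sum_list (G Mod H) (map (\<lambda>k. (\<psi> ^^ k) ` SQ) [0..<Suc n]))"
      unfolding pos_expansive_def by blast
    have SHG: "subgroup SH G" by (rule G.incl_subgroup[OF H SH(1)])
    have SHH: "SH \<subseteq> H" using subgroup.subset[OF SH(1)] by simp
    have geq: "(\<psi> ^^ k) (H #> x) = H #> (\<phi> ^^ k) x" if "x \<in> carrier G" for k x
      using funpow_coset[of G \<phi> \<psi> H x k] pc psi that by blast
    have "\<exists>S. subgroup S G \<and> finite S \<and> (\<forall>F. subgroup F G \<and> finite F \<longrightarrow>
             (\<exists>n. F \<subseteq> generate G (\<Union>k\<in>{0..<Suc n}. (\<phi> ^^ k) ` S)))"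
    proof (rule G.core[where f = "\<lambda>k. \<phi> ^^ k" and g = "\<lambda>k. \<psi> ^^ k" and J = "\<lambda>n. {0..<Suc n}",
          OF tor H hom_funpow[OF phom] geq _ _ SHG SHH SH(2) _ SQ])
      show "\<And>n m. n \<le> m \<Longrightarrow> {0..<Suc n} \<subseteq> {0..<Suc m}" by auto
      show "\<And>n. finite {0..<Suc n}" by simp
    next
      fix K assume K: "subgroup K G" "K \<subseteq> H" "finite K"
      have "subgroup K (G\<lparr>carrier := H\<rparr>)" by (rule G.subgroup_incl[OF K(1) H K(2)])
      then obtain n where "K \<subseteq> set_sum_list (G\<lparr>carrier := H\<rparr>) (map (\<lambda>k. (\<phi> ^^ k) ` SH) [0..<Suc n])"
        using SHe K(3) by blast
      then have "K \<subseteq> generate G (\<Union>k\<in>{0..<Suc n}. (\<phi> ^^ k) ` SH)"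
        using sumG[of "\<lambda>k. (\<phi> ^^ k) ` SH"] imgG[OF hom_funpow[OF phom] SHG]
        by (simp add: set_sum_list_carrier del: upt_Suc)
      then show "\<exists>n. K \<subseteq> generate G (\<Union>k\<in>{0..<Suc n}. (\<phi> ^^ k) ` SH)" by blast
    next
      fix F assume F: "subgroup F (G Mod H)" "finite F"
      then obtain n where "F \<subseteq> set_sum_list (G Mod H) (map (\<lambda>k. (\<psi> ^^ k) ` SQ) [0..<Suc n])"
        using SQe by blast
      moreover have "subgroup ((\<psi> ^^ k) ` SQ) (G Mod H)" for k
        by (rule G.coset_map_subgroup[OF H hom_funpow[OF phom] geq SQ(1)])
      ultimately have "F \<subseteq> generate (G Mod H) (\<Union>k\<in>{0..<Suc n}. (\<psi> ^^ k) ` SQ)"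
        using sumQ[of "\<lambda>k. (\<psi> ^^ k) ` SQ"] by (simp del: upt_Suc)
      then show "\<exists>n. F \<subseteq> generate (G Mod H) (\<Union>k\<in>{0..<Suc n}. (\<psi> ^^ k) ` SQ)" by blast
    qed
    then obtain S where S: "subgroup S G" "finite S" and Se: "\<forall>F. subgroup F G \<and> finite F \<longrightarrow>
             (\<exists>n. F \<subseteq> generate G (\<Union>k\<in>{0..<Suc n}. (\<phi> ^^ k) ` S))" by blast
    have "set_sum_list G (map (\<lambda>k. (\<phi> ^^ k) ` S) [0..<Suc n]) = generate G (\<Union>k\<in>{0..<Suc n}. (\<phi> ^^ k) ` S)" for n
      using sumG[of "\<lambda>k. (\<phi> ^^ k) ` S"] imgG[OF hom_funpow[OF phom] S(1)] by (simp del: upt_Suc)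
    then show "pos_expansive G \<phi>" unfolding pos_expansive_def using S Se by metis
  qed
  have P2: "\<phi> \<in> iso G G \<and> \<phi> \<in> iso (G\<lparr>carrier := H\<rparr>) (G\<lparr>carrier := H\<rparr>)
            \<and> expansive (G\<lparr>carrier := H\<rparr>) \<phi> \<and> expansive (G Mod H) \<psi> \<longrightarrow> expansive G \<phi>"
  proof
    assume A: "\<phi> \<in> iso G G \<and> \<phi> \<in> iso (G\<lparr>carrier := H\<rparr>) (G\<lparr>carrier := H\<rparr>)
            \<and> expansive (G\<lparr>carrier := H\<rparr>) \<phi> \<and> expansive (G Mod H) \<psi>"
    then have isoG: "\<phi> \<in> iso G G" and isoH: "\<phi> \<in> iso (G\<lparr>carrier := H\<rparr>) (G\<lparr>carrier := H\<rparr>)" by auto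
    from A obtain SH SQ where SH: "subgroup SH (G\<lparr>carrier := H\<rparr>)" "finite SH"
      and SHe: "\<forall>F. subgroup F (G\<lparr>carrier := H\<rparr>) \<and> finite F \<longrightarrow>
           (\<exists>n::nat. F \<subseteq> set_sum_list (G\<lparr>carrier := H\<rparr>) (map (\<lambda>k. int_iter (G\<lparr>carrier := H\<rparr>) \<phi> k ` SH) [- int n..int n]))"
      and SQ: "subgroup SQ (G Mod H)" "finite SQ"
      and SQe: "\<forall>F. subgroup F (G Mod H) \<and> finite F \<longrightarrow>
           (\<exists>n::nat. F \<subseteq> set_sum_list (G Mod H) (map (\<lambda>k. int_iter (G Mod H) \<psi> k ` SQ) [- int n..int n]))"
      unfolding expansive_def by blast
    have SHG: "subgroup SH G" by (rule G.incl_subgroup[OF H SH(1)])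
    have SHH: "SH \<subseteq> H" using subgroup.subset[OF SH(1)] by simp
    have ihom: "int_iter G \<phi> k \<in> hom G G" for k by (rule G.int_iter_hom[OF isoG])
    have SHeq: "int_iter (G\<lparr>carrier := H\<rparr>) \<phi> k ` SH = int_iter G \<phi> k ` SH" for k
      using G.int_iter_sub[OF H isoG isoH] SHH by (intro image_cong) auto
    have geq: "int_iter (G Mod H) \<psi> k (H #> x) = H #> int_iter G \<phi> k x" if "x \<in> carrier G" for k x
      by (rule G.int_iter_coset[OF H isoG isoH psi that])
    have "\<exists>S. subgroup S G \<and> finite S \<and> (\<forall>F. subgroup F G \<and> finite F \<longrightarrow>
             (\<exists>n. F \<subseteq> generate G (\<Union>k\<in>{- int n..int n}. int_iter G \<phi> k ` S)))"
    proof (rule G.core[where f = "\<lambda>k. int_iter G \<phi> k" and g = "\<lambda>k. int_iter (G Mod H) \<psi> k"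
          and J = "\<lambda>n. {- int n..int n}", OF tor H ihom geq _ _ SHG SHH SH(2) _ SQ])
      show "\<And>n m. n \<le> m \<Longrightarrow> {- int n..int n} \<subseteq> {- int m..int m}" by auto
      show "\<And>n. finite {- int n..int n}" by simp
    next
      fix K assume K: "subgroup K G" "K \<subseteq> H" "finite K"
      have "subgroup K (G\<lparr>carrier := H\<rparr>)" by (rule G.subgroup_incl[OF K(1) H K(2)])
      then obtain n where "K \<subseteq> set_sum_list (G\<lparr>carrier := H\<rparr>) (map (\<lambda>k. int_iter (G\<lparr>carrier := H\<rparr>) \<phi> k ` SH) [- int n..int n])"
        using SHe K(3) by blast
      then have "K \<subseteq> generate G (\<Union>k\<in>{- int n..int n}. int_iter G \<phi> k ` SH)"
        using sumG[of "\<lambda>k. int_iter G \<phi> k ` SH"] imgG[OF ihom SHG]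
        by (simp add: set_sum_list_carrier SHeq)
      then show "\<exists>n. K \<subseteq> generate G (\<Union>k\<in>{- int n..int n}. int_iter G \<phi> k ` SH)" by blast
    next
      fix F assume F: "subgroup F (G Mod H)" "finite F"
      then obtain n where "F \<subseteq> set_sum_list (G Mod H) (map (\<lambda>k. int_iter (G Mod H) \<psi> k ` SQ) [- int n..int n])"
        using SQe by blast
      moreover have "subgroup (int_iter (G Mod H) \<psi> k ` SQ) (G Mod H)" for k
        by (rule G.coset_map_subgroup[OF H ihom geq SQ(1)])
      ultimately have "F \<subseteq> generate (G Mod H) (\<Union>k\<in>{- int n..int n}. int_iter (G Mod H) \<psi> k ` SQ)"
        using sumQ[of "\<lambda>k. int_iter (G Mod H) \<psi> k ` SQ"] by simp
      then show "\<exists>n. F \<subseteq> generate (G Mod H) (\<Union>k\<in>{- int n..int n}. int_iter (G Mod H) \<psi> k ` SQ)" by blast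
    qed
    then obtain S where S: "subgroup S G" "finite S" and Se: "\<forall>F. subgroup F G \<and> finite F \<longrightarrow>
             (\<exists>n. F \<subseteq> generate G (\<Union>k\<in>{- int n..int n}. int_iter G \<phi> k ` S))" by blast
    have "set_sum_list G (map (\<lambda>k. int_iter G \<phi> k ` S) [- int n..int n]) = generate G (\<Union>k\<in>{- int n..int n}. int_iter G \<phi> k ` S)" for n
      using sumG[of "\<lambda>k. int_iter G \<phi> k ` S"] imgG[OF ihom S(1)] by simp
    then show "expansive G \<phi>" unfolding expansive_def using S Se by metis
  qed
  show ?thesis using P1 P2 by blast
qed

end
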